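(* Assume the setting and standing assumptions described in the context, and let $d>0$ with $\Xi\subset\Omega_d=\{z\in\mathbb{R}^{2n}:|z|<d\}$. Let $p\ge1$, $\epsilon>0$, and let $\delta_0,\dots,\delta_p\in\mathbb{R}$ satisfy: $\mathcal{L}_F^p\phi(z)\le\sum_{i=0}^{p-1}\delta_i\mathcal{L}_F^i\phi(z)+\delta_p$ for all $z\in\Omega_d$; $\delta_0\phi((x,0))+\delta_p\ge\epsilon$ for all $x\in\mathrm{Z}$; and $\delta_i\ge0$ for all $i$. Let $A$ be the $(p+1)\times(p+1)$ matrix with $A_{k,k+1}=1$ for $k=1,\dots,p-1$, $p$-th row $(\delta_0,\dots,\delta_{p-1},1)$, last row zero and other entries zero; $C=(1,0,\dots,0)$. Define $$\eta(x,0)=\big(\phi((x,0)),\max(\mathcal{L}_F\phi((x,0)),0),\dots,\max(\mathcal{L}_F^{p-1}\phi((x,0)),0),\delta_p\big)^\top,\qquad \eta_1(x,t)=Ce^{At}\eta(x,0).$$ Then for every $x\in\mathrm{Z}$, the map $t\mapsto\eta_1(x,t)$ is strictly increasing for $t>0$.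
   Context: Let $f:\mathbb{R}^n\times\mathbb{R}^m\to\mathbb{R}^n$ and a feedback law $\upsilon:\mathbb{R}^n\to\mathbb{R}^m$ be given. Define $F:\mathbb{R}^{2n}\to\mathbb{R}^{2n}$ by $F(z,e)=\big(f(z,\upsilon(z+e)),\,-f(z,\upsilon(z+e))\big)$. For $x\in\mathbb{R}^n$, $\xi(t;x)$ denotes the solution of $\dot\xi=F(\xi)$ with $\xi(0;x)=(x,0)$. A triggering function $\phi:\mathbb{R}^{2n}\to\mathbb{R}$ is given. $\mathcal{L}_F^k\phi$ denotes the $k$-th Lie derivative of $\phi$ along $F$ ($\mathcal{L}_F^0\phi=\phi$). Standing assumptions: (i) $F$ is smooth and homogeneous of degree $\alpha\ge1$ with all weights $1$, i.e. $F(\lambda\xi)=\lambda^{\alpha+1}F(\xi)$ for all $\lambda>0$; (ii) $\phi$ is smooth and homogeneous of degree $\theta\ge1$ with weights $1$, i.e. $\phi(\lambda\xi)=\lambda^{\theta+1}\phi(\xi)$ for all $\lambda>0$; (iii) for every $x\ne0$, $\phi((x,0))<0$ and there exists $t_x\in(0,\infty)$ with $\phi(\xi(t_x;x))=0$; (iv) compact sets $\mathrm{Z}\subset\mathbb{R}^n$, $\Xi\subset\mathbb{R}^{2n}$ containing a neighbourhood of the origin are given such that for all $x\in\mathrm{Z}$, $t\ge0$: $\phi(\xi(t;x))\le0\Rightarrow\xi(t;x)\in\Xi$; (v) the origin is the only equilibrium of $\dot\zeta=f(\zeta,\upsilon(\zeta))$. *)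

theory Defs
  imports "HOL-Analysis.Analysis"
begin

definition Fsys :: "(real^'n \<Rightarrow> real^'m \<Rightarrow> real^'n) \<Rightarrow> (real^'n \<Rightarrow> real^'m)
    \<Rightarrow> ((real^'n) \<times> (real^'n)) \<Rightarrow> ((real^'n) \<times> (real^'n))" where
  "Fsys f v = (\<lambda>(z, e). (f z (v (z + e)), - f z (v (z + e))))"

fun hderiv :: "('a::real_normed_vector \<Rightarrow> 'b::real_normed_vector) \<Rightarrow> 'a list \<Rightarrow> 'a \<Rightarrow> 'b" where
  "hderiv g [] = g"
| "hderiv g (v # vs) = (\<lambda>x. frechet_derivative (hderiv g vs) (at x) v)"

definition smooth_map :: "('a::real_normed_vector \<Rightarrow> 'b::real_normed_vector) \<Rightarrow> bool" where
  "smooth_map g \<longleftrightarrow> (\<forall>vs x. hderiv g vs differentiable (at x))"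

fun lie :: "('a::real_normed_vector \<Rightarrow> 'a) \<Rightarrow> ('a \<Rightarrow> real) \<Rightarrow> nat \<Rightarrow> 'a \<Rightarrow> real" where
  "lie F psi 0 = psi"
| "lie F psi (Suc k) = (\<lambda>x. frechet_derivative (lie F psi k) (at x) (F x))"

text \<open>N x N real matrices as functions on indices {0..<N}; product, power, exponential.\<close>
definition mmult :: "nat \<Rightarrow> (nat \<Rightarrow> nat \<Rightarrow> real) \<Rightarrow> (nat \<Rightarrow> nat \<Rightarrow> real) \<Rightarrow> nat \<Rightarrow> nat \<Rightarrow> real" where
  "mmult N A B = (\<lambda>i j. \<Sum>l<N. A i l * B l j)"

definition mpow :: "nat \<Rightarrow> (nat \<Rightarrow> nat \<Rightarrow> real) \<Rightarrow> nat \<Rightarrow> nat \<Rightarrow> nat \<Rightarrow> real" where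
  "mpow N A k = (mmult N A ^^ k) (\<lambda>i j. if i = j then 1 else 0)"

definition mexp :: "nat \<Rightarrow> (nat \<Rightarrow> nat \<Rightarrow> real) \<Rightarrow> nat \<Rightarrow> nat \<Rightarrow> real" where
  "mexp N A = (\<lambda>i j. \<Sum>k. mpow N A k i j / fact k)"

text \<open>The (p+1)x(p+1) matrix A, 0-based indices: A(k,k+1)=1 for k < p-1; row p-1 is
  (delta_0,...,delta_{p-1},1); row p is zero.\<close>
definition Amat :: "nat \<Rightarrow> (nat \<Rightarrow> real) \<Rightarrow> nat \<Rightarrow> nat \<Rightarrow> real" where
  "Amat p \<delta> = (\<lambda>i j.
     if i + 1 < p \<and> j = i + 1 then 1
     else if i = p - 1 \<and> j < p then \<delta> j
     else if i = p - 1 \<and> j = p then 1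
     else 0)"

definition Cvec :: "nat \<Rightarrow> real" where
  "Cvec = (\<lambda>j. if j = 0 then 1 else 0)"

text \<open>eta(x,0), 0-based components 0..p.\<close>
definition eta0 :: "((real^'n) \<times> (real^'n) \<Rightarrow> (real^'n) \<times> (real^'n)) \<Rightarrow> ((real^'n) \<times> (real^'n) \<Rightarrow> real)
    \<Rightarrow> nat \<Rightarrow> (nat \<Rightarrow> real) \<Rightarrow> real^'n \<Rightarrow> nat \<Rightarrow> real" where
  "eta0 F \<phi> p \<delta> x = (\<lambda>j. if j = 0 then \<phi> (x, 0)
                         else if j < p then max (lie F \<phi> j (x, 0)) 0
                         else \<delta> p)"

definition eta1 :: "((real^'n) \<times> (real^'n) \<Rightarrow> (real^'n) \<times> (real^'n)) \<Rightarrow> ((real^'n) \<times> (real^'n) \<Rightarrow> real)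
    \<Rightarrow> nat \<Rightarrow> (nat \<Rightarrow> real) \<Rightarrow> real^'n \<Rightarrow> real \<Rightarrow> real" where
  "eta1 F \<phi> p \<delta> x t =
     (\<Sum>i\<le>p. \<Sum>j\<le>p. Cvec i * mexp (p + 1) (\<lambda>a b. t * Amat p \<delta> a b) i j * eta0 F \<phi> p \<delta> x j)"

end

theory Submission
  imports Defs
begin

lemma mpow_0: "mpow N A 0 = (\<lambda>i j. if i = j then 1 else 0)"
  by (simp add: mpow_def)

lemma mpow_Suc: "mpow N A (Suc k) i j = (\<Sum>l<N. A i l * mpow N A k l j)"
  by (simp add: mpow_def mmult_def)

lemma mpow_scale: "mpow N (\<lambda>a b. t * A a b) k i j = t ^ k * mpow N A k i j"
proof (induction k arbitrary: i j)
  case 0 then show ?case by (simp add: mpow_0)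
next
  case (Suc k) then show ?case
    by (simp add: mpow_Suc sum_distrib_left algebra_simps)
qed

lemma mpow_bound:
  assumes "\<And>i j. \<bar>A i j\<bar> \<le> B" "0 \<le> B"
  shows "\<bar>mpow N A k i j\<bar> \<le> (real N * B) ^ k"
proof (induction k arbitrary: i j)
  case 0 then show ?case by (simp add: mpow_0)
next
  case (Suc k)
  have "\<bar>mpow N A (Suc k) i j\<bar> \<le> (\<Sum>l<N. \<bar>A i l * mpow N A k l j\<bar>)"
    unfolding mpow_Suc by (rule sum_abs)
  also have "\<dots> \<le> (\<Sum>l<N. B * (real N * B) ^ k)"
    by (intro sum_mono) (auto simp: abs_mult intro!: mult_mono assms Suc)
  also have "\<dots> = (real N * B) ^ Suc k" by simp
  finally show ?case .
qed

lemma mexp_series: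
  assumes "\<And>i j. \<bar>A i j\<bar> \<le> B" "0 \<le> B"
  shows "summable (\<lambda>k. t ^ k * mpow N A k i j / fact k)"
proof (rule summable_comparison_test'[where N=0])
  show "summable (\<lambda>k. inverse (fact k) * (\<bar>t\<bar> * (real N * B)) ^ k)" by (rule summable_exp)
  fix k :: nat
  have "norm (t ^ k * mpow N A k i j / fact k) = \<bar>t\<bar>^k * \<bar>mpow N A k i j\<bar> / fact k"
    by (simp add: abs_mult power_abs)
  also have "\<dots> \<le> \<bar>t\<bar>^k * (real N * B) ^ k / fact k"
    by (intro divide_right_mono mult_left_mono mpow_bound assms) auto
  also have "\<dots> = inverse (fact k) * (\<bar>t\<bar> * (real N * B)) ^ k"
    by (simp add: power_mult_distrib field_simps)
  finally show "norm (t ^ k * mpow N A k i j / fact k) \<le> inverse (fact k) * (\<bar>t\<bar> * (real N * B)) ^ k" .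
qed

lemma u_Suc: "(\<Sum>j<N. mpow N A (Suc k) i j * v j) = (\<Sum>l<N. A i l * (\<Sum>j<N. mpow N A k l j * v j))"
proof -
  have "(\<Sum>j<N. mpow N A (Suc k) i j * v j) = (\<Sum>j<N. \<Sum>l<N. A i l * (mpow N A k l j * v j))"
    by (simp add: mpow_Suc sum_distrib_right mult.assoc)
  also have "\<dots> = (\<Sum>l<N. \<Sum>j<N. A i l * (mpow N A k l j * v j))"
    by (rule sum.swap)
  also have "\<dots> = (\<Sum>l<N. A i l * (\<Sum>j<N. mpow N A k l j * v j))"
    by (simp add: sum_distrib_left)
  finally show ?thesis .
qed

lemma Amat_nonneg: "\<forall>j\<le>p. 0 \<le> \<delta> j \<Longrightarrow> 0 \<le> Amat p \<delta> i j"
  by (auto simp: Amat_def)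

lemma Amat_abs: "\<bar>Amat p \<delta> i j\<bar> \<le> 1 + (\<Sum>l<p. \<bar>\<delta> l\<bar>)"
proof -
  have "j < p \<Longrightarrow> \<bar>\<delta> j\<bar> \<le> (\<Sum>l<p. \<bar>\<delta> l\<bar>)"
    by (rule member_le_sum) auto
  moreover have "0 \<le> (\<Sum>l<p. \<bar>\<delta> l\<bar>)" by (simp add: sum_nonneg)
  ultimately show ?thesis by (auto simp: Amat_def)
qed

lemma key:
  fixes p :: nat and \<delta> \<eta> :: "nat \<Rightarrow> real"
  defines "A \<equiv> Amat p \<delta>"
  defines "u \<equiv> \<lambda>k i. (\<Sum>j<Suc p. mpow (Suc p) A k i j * \<eta> j)"
  assumes p: "p \<ge> 1"
    and h1: "\<forall>j. 1 \<le> j \<longrightarrow> j \<le> p \<longrightarrow> 0 \<le> \<eta> j"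
    and h2: "\<forall>j\<le>p. 0 \<le> \<delta> j"
    and h3: "\<delta> 0 * \<eta> 0 + \<eta> p > 0"
  shows "\<forall>k\<ge>1. \<forall>i. 0 \<le> u k i" "u p 0 > 0"
proof -
  have uS: "u (Suc k) i = (\<Sum>l<Suc p. A i l * u k l)" for k i
    unfolding u_def by (rule u_Suc)
  have u0: "u 0 i = (if i < Suc p then \<eta> i else 0)" for i
  proof -
    have "u 0 i = (\<Sum>j<Suc p. if i = j then \<eta> j else 0)"
      unfolding u_def mpow_0 by (intro sum.cong) auto
    then show ?thesis by simp
  qed
  have last: "u 1 (p - 1) \<ge> \<delta> 0 * \<eta> 0 + \<eta> p"
  proof -
    have e1: "u 1 (p - 1) = (\<Sum>l<Suc p. A (p - 1) l * u 0 l)" using uS[of 0] by simp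
    have e2: "(\<Sum>l<Suc p. A (p - 1) l * u 0 l) = (\<Sum>l<p. A (p - 1) l * u 0 l) + A (p - 1) p * u 0 p"
      by (rule sum.lessThan_Suc)
    have e3: "(\<Sum>l<p. A (p - 1) l * u 0 l) = (\<Sum>l<p. \<delta> l * \<eta> l)"
    proof (rule sum.cong)
      fix l assume "l \<in> {..<p}"
      then have "l < p" by simp
      then show "A (p - 1) l * u 0 l = \<delta> l * \<eta> l" using p by (simp add: A_def Amat_def u0)
    qed simp
    have e4: "A (p - 1) p * u 0 p = \<eta> p" using p by (simp add: A_def Amat_def u0)
    have ge: "(\<Sum>l<p. \<delta> l * \<eta> l) \<ge> \<delta> 0 * \<eta> 0"
    proof -
      have "(\<Sum>l<p. \<delta> l * \<eta> l) = \<delta> 0 * \<eta> 0 + (\<Sum>l\<in>{1..<p}. \<delta> l * \<eta> l)"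
        using p by (simp only: lessThan_atLeast0 sum.atLeast_Suc_lessThan[of 0 p] One_nat_def)
      moreover have "(\<Sum>l\<in>{1..<p}. \<delta> l * \<eta> l) \<ge> 0"
        using h1 h2 by (intro sum_nonneg) auto
      ultimately show ?thesis by simp
    qed
    show ?thesis using e1 e2 e3 e4 ge by linarith
  qed
  have u1: "0 \<le> u 1 i" for i
  proof -
    have e: "u 1 i = (\<Sum>l<Suc p. A i l * u 0 l)" using uS[of 0] by simp
    consider "i + 1 < p" | "i = p - 1" | "\<not> i + 1 < p" "i \<noteq> p - 1" by blast
    then show ?thesis
    proof cases
      case 1
      then have "\<And>l. A i l * u 0 l = (if l = i + 1 then \<eta> (i+1) else 0)"
        by (auto simp: A_def Amat_def u0)
      then have "u 1 i = \<eta> (i+1)" unfolding e using 1 by simp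
      then show ?thesis using h1 1 by simp
    next
      case 2 then show ?thesis using last h3 by simp
    next
      case 3 then show ?thesis unfolding e by (simp add: A_def Amat_def)
    qed
  qed
  have Apos: "0 \<le> A i l" for i l unfolding A_def using h2 by (rule Amat_nonneg)
  have upos: "0 \<le> u (Suc k) i" for k i
  proof (induction k arbitrary: i)
    case 0 then show ?case using u1 by simp
  next
    case (Suc k) then show ?case unfolding uS[of "Suc k"]
      by (intro sum_nonneg mult_nonneg_nonneg Apos) auto
  qed
  show "\<forall>k\<ge>1. \<forall>i. 0 \<le> u k i"
  proof (intro allI impI)
    fix k :: nat and i assume "1 \<le> k"
    then obtain m where "k = Suc m" by (cases k) auto
    then show "0 \<le> u k i" using upos by simp
  qed
  have chain: "m \<le> p - 1 \<Longrightarrow> u (m+1) (p - 1 - m) \<ge> \<delta> 0 * \<eta> 0 + \<eta> p" for m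
  proof (induction m)
    case 0 then show ?case using last by simp
  next
    case (Suc m)
    let ?i = "p - 1 - Suc m"
    have ii: "?i + 1 = p - 1 - m" "?i + 1 < p" using Suc.prems by auto
    have e: "u (Suc m + 1) ?i = (\<Sum>l<Suc p. A ?i l * u (m+1) l)" using uS by simp
    have s: "A ?i (p - 1 - m) * u (m+1) (p - 1 - m) \<le> (\<Sum>l<Suc p. A ?i l * u (m+1) l)"
    proof (rule member_le_sum)
      show "p - 1 - m \<in> {..<Suc p}" by simp
      fix l assume "l \<in> {..<Suc p} - {p - 1 - m}"
      show "0 \<le> A ?i l * u (m+1) l" using upos[of m l] Apos[of ?i l] by simp
    qed simp
    have a1: "A ?i (p - 1 - m) = 1" using ii by (simp add: A_def Amat_def)
    have ih: "\<delta> 0 * \<eta> 0 + \<eta> p \<le> u (m+1) (p - 1 - m)" using Suc by simp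
    show ?case using e s a1 ih by simp
  qed
  from chain[of "p - 1"] p h3 show "u p 0 > 0" by simp
qed

lemma eta1_series:
  fixes A :: "nat \<Rightarrow> nat \<Rightarrow> real" and \<eta> :: "nat \<Rightarrow> real" and p :: nat
  assumes "\<And>i j. \<bar>A i j\<bar> \<le> B" "0 \<le> B"
  defines "u \<equiv> \<lambda>k i. (\<Sum>j<Suc p. mpow (Suc p) A k i j * \<eta> j)"
  shows "(\<Sum>i\<le>p. \<Sum>j\<le>p. Cvec i * mexp (p + 1) (\<lambda>a b. t * A a b) i j * \<eta> j)
           = (\<Sum>k. t ^ k * u k 0 / fact k)"
    and "summable (\<lambda>k. t ^ k * u k 0 / fact k)"
proof -
  let ?f = "\<lambda>j k. t ^ k * mpow (Suc p) A k 0 j / fact k * \<eta> j"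
  have sj: "summable (?f j)" for j
    by (intro summable_mult2 mexp_series[OF assms(1,2)])
  have pw: "(\<Sum>j<Suc p. ?f j k) = t ^ k * u k 0 / fact k" for k
  proof -
    have "(\<Sum>j<Suc p. ?f j k) = (\<Sum>j<Suc p. (t ^ k / fact k) * (mpow (Suc p) A k 0 j * \<eta> j))"
      by (intro sum.cong) auto
    also have "\<dots> = (t ^ k / fact k) * u k 0" unfolding u_def by (rule sum_distrib_left[symmetric])
    finally show ?thesis by simp
  qed
  have "(\<Sum>i\<le>p. \<Sum>j\<le>p. Cvec i * mexp (p + 1) (\<lambda>a b. t * A a b) i j * \<eta> j)
      = (\<Sum>i\<le>p. if i = 0 then (\<Sum>j\<le>p. mexp (p + 1) (\<lambda>a b. t * A a b) 0 j * \<eta> j) else 0)"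
    by (intro sum.cong) (auto simp: Cvec_def)
  also have "\<dots> = (\<Sum>j<Suc p. mexp (Suc p) (\<lambda>a b. t * A a b) 0 j * \<eta> j)"
    by (simp add: lessThan_Suc_atMost)
  also have "\<dots> = (\<Sum>j<Suc p. \<Sum>k. ?f j k)"
    by (intro sum.cong refl) (simp add: mexp_def mpow_scale suminf_mult2[OF mexp_series[OF assms(1,2)]])
  also have "\<dots> = (\<Sum>k. \<Sum>j<Suc p. ?f j k)"
    by (rule suminf_sum[symmetric]) (rule sj)
  also have "\<dots> = (\<Sum>k. t ^ k * u k 0 / fact k)"
    by (simp only: pw)
  finally show "(\<Sum>i\<le>p. \<Sum>j\<le>p. Cvec i * mexp (p + 1) (\<lambda>a b. t * A a b) i j * \<eta> j)
           = (\<Sum>k. t ^ k * u k 0 / fact k)" .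
  have "summable (\<lambda>k. \<Sum>j<Suc p. ?f j k)" by (rule summable_sum) (rule sj)
  then show "summable (\<lambda>k. t ^ k * u k 0 / fact k)"
    by (simp only: pw)
qed

theorem proposition5:
  fixes f :: "real^'n \<Rightarrow> real^'m \<Rightarrow> real^'n"
    and \<upsilon> :: "real^'n \<Rightarrow> real^'m"
    and \<xi> :: "real^'n \<Rightarrow> real \<Rightarrow> (real^'n) \<times> (real^'n)"
    and \<phi> :: "(real^'n) \<times> (real^'n) \<Rightarrow> real"
    and \<alpha> \<theta> d \<epsilon> :: real
    and Z :: "(real^'n) set" and \<Xi> :: "((real^'n) \<times> (real^'n)) set"
    and p :: nat and \<delta> :: "nat \<Rightarrow> real"
  defines "F \<equiv> Fsys f \<upsilon>"
  assumes F_smooth: "smooth_map F"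
    and \<alpha>: "\<alpha> \<ge> 1"
    and F_hom: "\<forall>c>0. \<forall>w. F (c *\<^sub>R w) = (c powr (\<alpha> + 1)) *\<^sub>R F w"
    and \<phi>_smooth: "smooth_map \<phi>"
    and \<theta>: "\<theta> \<ge> 1"
    and \<phi>_hom: "\<forall>c>0. \<forall>w. \<phi> (c *\<^sub>R w) = (c powr (\<theta> + 1)) * \<phi> w"
    and \<xi>_init: "\<forall>x. \<xi> x 0 = (x, 0)"
    and \<xi>_ode: "\<forall>x. \<forall>t\<ge>0. (\<xi> x has_vector_derivative F (\<xi> x t)) (at t within {0..})"
    and trig: "\<forall>x. x \<noteq> 0 \<longrightarrow> \<phi> (x, 0) < 0 \<and> (\<exists>t>0. \<phi> (\<xi> x t) = 0)"
    and Z: "compact Z" "0 \<in> interior Z"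
    and \<Xi>: "compact \<Xi>" "0 \<in> interior \<Xi>"
    and inv: "\<forall>x\<in>Z. \<forall>t\<ge>0. \<phi> (\<xi> x t) \<le> 0 \<longrightarrow> \<xi> x t \<in> \<Xi>"
    and equil: "\<forall>\<zeta>. f \<zeta> (\<upsilon> \<zeta>) = 0 \<longleftrightarrow> \<zeta> = 0"
    and d: "d > 0" "\<Xi> \<subseteq> ball 0 d"
    and p: "p \<ge> 1" and \<epsilon>: "\<epsilon> > 0"
    and bound: "\<forall>z\<in>ball 0 d. lie F \<phi> p z \<le> (\<Sum>i<p. \<delta> i * lie F \<phi> i z) + \<delta> p"
    and pos: "\<forall>x\<in>Z. \<delta> 0 * \<phi> (x, 0) + \<delta> p \<ge> \<epsilon>"
    and \<delta>_nonneg: "\<forall>i\<le>p. \<delta> i \<ge> 0"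
  shows "\<forall>x\<in>Z. strict_mono_on {0<..} (eta1 F \<phi> p \<delta> x)"
proof (intro ballI)
  fix x assume xZ: "x \<in> Z"
  define \<eta> where "\<eta> = eta0 F \<phi> p \<delta> x"
  define A where "A = Amat p \<delta>"
  define B where "B = 1 + (\<Sum>l<p. \<bar>\<delta> l\<bar>)"
  define u where "u = (\<lambda>k i. \<Sum>j<Suc p. mpow (Suc p) A k i j * \<eta> j)"
  have AB: "\<And>i j. \<bar>A i j\<bar> \<le> B" unfolding A_def B_def by (rule Amat_abs)
  have B0: "0 \<le> B" unfolding B_def by (simp add: sum_nonneg)
  have h1: "\<forall>j. 1 \<le> j \<longrightarrow> j \<le> p \<longrightarrow> 0 \<le> \<eta> j"
    using \<delta>_nonneg by (auto simp: \<eta>_def eta0_def)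
  have h3: "\<delta> 0 * \<eta> 0 + \<eta> p > 0"
    using pos xZ \<epsilon> p by (auto simp: \<eta>_def eta0_def)
  have K: "\<forall>k\<ge>1. \<forall>i. 0 \<le> u k i" "u p 0 > 0"
    using key[OF p h1 \<delta>_nonneg h3] unfolding u_def A_def by auto
  have ser: "eta1 F \<phi> p \<delta> x t = (\<Sum>k. t ^ k * u k 0 / fact k)"
    and sm: "summable (\<lambda>k. t ^ k * u k 0 / fact k)" for t
    using eta1_series[OF AB B0, where p=p and \<eta>=\<eta> and t=t] unfolding eta1_def u_def A_def \<eta>_def by auto
  show "strict_mono_on {0<..} (eta1 F \<phi> p \<delta> x)"
  proof (rule strict_mono_onI)
    fix s t :: real assume st: "s \<in> {0<..}" "t \<in> {0<..}" "s < t"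
    have tk: "s ^ k \<le> t ^ k" for k using st by (intro power_mono) auto
    have "0 < (\<Sum>k. t ^ k * u k 0 / fact k - s ^ k * u k 0 / fact k)"
    proof (rule suminf_pos2)
      show "summable (\<lambda>k. t ^ k * u k 0 / fact k - s ^ k * u k 0 / fact k)"
        by (intro summable_diff sm)
      fix k
      show "0 \<le> t ^ k * u k 0 / fact k - s ^ k * u k 0 / fact k"
      proof (cases k)
        case 0 then show ?thesis by simp
      next
        case (Suc m)
        then have "0 \<le> u k 0" using K(1) by auto
        then have "s ^ k * u k 0 \<le> t ^ k * u k 0" using tk by (intro mult_right_mono) auto
        then show ?thesis by (simp add: divide_right_mono diff_divide_distrib[symmetric])
      qed
    next
      have "s ^ p < t ^ p" using st p by (intro power_strict_mono) auto
      then have "s ^ p * u p 0 < t ^ p * u p 0" using K(2) by simp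
      then show "0 < t ^ p * u p 0 / fact p - s ^ p * u p 0 / fact p"
        by (simp add: diff_divide_distrib[symmetric])
    qed
    also have "\<dots> = eta1 F \<phi> p \<delta> x t - eta1 F \<phi> p \<delta> x s"
      unfolding ser by (rule suminf_diff[symmetric]) (rule sm)+
    finally show "eta1 F \<phi> p \<delta> x s < eta1 F \<phi> p \<delta> x t" by simp
  qed
qed

end
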